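(* Let $G$ be an edge-coloured multigraph, $t \ge 5$, $M$ a rainbow matching of maximum size in $G$, $C_0$ the set of colours not used on $M$, and $N$ a $t$-auxiliary matching for $M$. If $v_e z$ is a $(C_0 \cup C_N)$-coloured edge with $e \in M_N$ and $z \notin V(N) \cup V(M\setminus M_N)$, then $z = m(x_e)$ or the edge $v_e z$ has colour $c(e)$.
   Context: A rainbow matching is a matching whose edges have pairwise distinct colours; an edge is $C$-coloured if its colour lies in $C$; $c(e)$ is the colour of edge $e$. Let $V$ be the vertex set of $G$. For a rainbow matching $M$ with unused colour set $C_0$, a $t$-auxiliary matching for $M$ is a matching $N$ each of whose edges has one endpoint in $V\setminus V(M)$ and the other in $V(M)$, such that for each edge of $N$ its pair of endpoints is joined by edges of at least $t$ distinct colours from $C_0$, and no two edges of $N$ intersect the same edge of $M$. $M_N \subseteq M$ is the set of edges of $M$ intersecting an edge of $N$; for $e \in M_N$, $x_e$ is the endpoint of $e$ lying in $V(N)$, $m(x_e)$ the other endpoint of $e$, and $v_e$ the vertex matched to $x_e$ in $N$. $C_N$ is the set of colours of the edges of $M_N$. *)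

theory Defs
  imports Main
begin

text \<open>An edge-coloured multigraph: vertex set V, edge identifiers E (parallel edges
allowed), endpoint map ends (each edge has exactly two distinct endpoints in V),
colouring col.\<close>

definition ec_multigraph :: "'v set \<Rightarrow> 'e set \<Rightarrow> ('e \<Rightarrow> 'v set) \<Rightarrow> bool" where
  "ec_multigraph V E ends \<longleftrightarrow> finite V \<and> finite E \<and>
     (\<forall>f\<in>E. ends f \<subseteq> V \<and> card (ends f) = 2)"

definition rainbow_matching :: "'e set \<Rightarrow> ('e \<Rightarrow> 'v set) \<Rightarrow> ('e \<Rightarrow> 'c) \<Rightarrow> 'e set \<Rightarrow> bool" where
  "rainbow_matching E ends col M \<longleftrightarrow> M \<subseteq> E \<and>
     (\<forall>e\<in>M. \<forall>f\<in>M. e \<noteq> f \<longrightarrow> ends e \<inter> ends f = {} \<and> col e \<noteq> col f)"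

definition max_rainbow_matching :: "'e set \<Rightarrow> ('e \<Rightarrow> 'v set) \<Rightarrow> ('e \<Rightarrow> 'c) \<Rightarrow> 'e set \<Rightarrow> bool" where
  "max_rainbow_matching E ends col M \<longleftrightarrow> rainbow_matching E ends col M \<and>
     (\<forall>M'. rainbow_matching E ends col M' \<longrightarrow> card M' \<le> card M)"

definition verts :: "('e \<Rightarrow> 'v set) \<Rightarrow> 'e set \<Rightarrow> 'v set" where
  "verts ends M = (\<Union>e\<in>M. ends e)"

definition unused_colours :: "('e \<Rightarrow> 'c) \<Rightarrow> 'e set \<Rightarrow> 'c set" where
  "unused_colours col M = - (col ` M)"

definition aux_matching ::
  "'v set \<Rightarrow> 'e set \<Rightarrow> ('e \<Rightarrow> 'v set) \<Rightarrow> ('e \<Rightarrow> 'c) \<Rightarrow> 'e set \<Rightarrow> nat \<Rightarrow> 'v set set \<Rightarrow> bool" where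
  "aux_matching V E ends col M t N \<longleftrightarrow>
     (\<forall>p\<in>N. \<exists>u w. p = {u, w} \<and> u \<in> V - verts ends M \<and> w \<in> verts ends M \<and>
        card {col f | f. f \<in> E \<and> ends f = {u, w} \<and> col f \<in> unused_colours col M} \<ge> t) \<and>
     (\<forall>p\<in>N. \<forall>q\<in>N. p \<noteq> q \<longrightarrow> p \<inter> q = {}) \<and>
     (\<forall>p\<in>N. \<forall>q\<in>N. \<forall>e\<in>M. p \<noteq> q \<longrightarrow> \<not> (p \<inter> ends e \<noteq> {} \<and> q \<inter> ends e \<noteq> {}))"

definition M_N :: "('e \<Rightarrow> 'v set) \<Rightarrow> 'e set \<Rightarrow> 'v set set \<Rightarrow> 'e set" where
  "M_N ends M N = {e \<in> M. \<exists>p\<in>N. p \<inter> ends e \<noteq> {}}"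

end

theory Submission
  imports Defs
begin

lemma swap:
  assumes fE: "finite E" and M: "max_rainbow_matching E ends col M"
    and F: "F \<subseteq> M" and T: "rainbow_matching E ends col T" and fT: "finite T"
    and cross: "\<forall>a\<in>M-F. \<forall>b\<in>T. ends a \<inter> ends b = {} \<and> col a \<noteq> col b"
    and cT: "card T > card F" and ne: "\<forall>b\<in>T. ends b \<noteq> {}"
  shows False
proof -
  have RM: "rainbow_matching E ends col M" using M by (simp add: max_rainbow_matching_def)
  have ME: "M \<subseteq> E" using RM by (simp add: rainbow_matching_def)
  have fM: "finite M" using ME fE finite_subset by blast
  have TE: "T \<subseteq> E" using T by (simp add: rainbow_matching_def)
  let ?M' = "(M - F) \<union> T"
  have R': "rainbow_matching E ends col ?M'"
    unfolding rainbow_matching_def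
  proof (intro conjI ballI impI)
    show "?M' \<subseteq> E" using ME TE by blast
  next
    fix a b assume a: "a \<in> ?M'" and b: "b \<in> ?M'" and ab: "a \<noteq> b"
    show "ends a \<inter> ends b = {}"
      using a b ab RM T cross unfolding rainbow_matching_def by blast
    show "col a \<noteq> col b"
    proof -
      have A: "\<forall>e\<in>M. \<forall>f\<in>M. e \<noteq> f \<longrightarrow> col e \<noteq> col f" using RM unfolding rainbow_matching_def by blast
      have B: "\<forall>e\<in>T. \<forall>f\<in>T. e \<noteq> f \<longrightarrow> col e \<noteq> col f" using T unfolding rainbow_matching_def by blast
      have C: "\<forall>a\<in>M-F. \<forall>b\<in>T. col a \<noteq> col b" using cross by blast
      from a b show ?thesis
      proof (elim UnE)
        assume "a \<in> M - F" "b \<in> M - F" thus ?thesis using A ab by blast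
      next
        assume "a \<in> M - F" "b \<in> T" thus ?thesis using C by blast
      next
        assume "a \<in> T" "b \<in> M - F" thus ?thesis using C by metis
      next
        assume "a \<in> T" "b \<in> T" thus ?thesis using B ab by blast
      qed
    qed
  qed
  have disj: "(M - F) \<inter> T = {}" using cross ne by blast
  have "card ?M' = card (M - F) + card T"
    using disj fM fT by (simp add: card_Un_disjoint)
  also have "card (M - F) = card M - card F" using F fM by (simp add: card_Diff_subset finite_subset)
  finally have "card ?M' > card M" using cT card_mono[OF fM F] by linarith
  moreover have "card ?M' \<le> card M" using M R' by (simp add: max_rainbow_matching_def)
  ultimately show False by linarith
qed

lemma two_elem: assumes "card S \<ge> 2" shows "\<exists>a\<in>S. a \<noteq> c"
proof (rule ccontr)
  assume "\<not> ?thesis" hence "S \<subseteq> {c}" by blast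
  hence "card S \<le> 1" using card_mono[of "{c}" S] by simp
  thus False using assms by simp
qed

lemma aux_pair:
  assumes N: "aux_matching V E ends col M t N" and t: "t \<ge> 2"
    and p: "p \<in> N" and f: "f \<in> M" and pf: "p \<inter> ends f \<noteq> {}"
  shows "\<exists>u w. p = {u,w} \<and> u \<notin> verts ends M \<and> w \<in> ends f \<and>
     (\<forall>c. \<exists>h\<in>E. ends h = {u,w} \<and> col h \<in> unused_colours col M \<and> col h \<noteq> c)"
proof -
  have A: "\<forall>p\<in>N. \<exists>u w. p = {u, w} \<and> u \<in> V - verts ends M \<and> w \<in> verts ends M \<and>
        card {col f | f. f \<in> E \<and> ends f = {u, w} \<and> col f \<in> unused_colours col M} \<ge> t"
    using N unfolding aux_matching_def by (rule conjunct1)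
  have "\<exists>u w. p = {u, w} \<and> u \<in> V - verts ends M \<and> w \<in> verts ends M \<and>
        card {col f | f. f \<in> E \<and> ends f = {u, w} \<and> col f \<in> unused_colours col M} \<ge> t"
    using A p by (rule bspec)
  then obtain u w where pu: "p = {u, w}" "u \<in> V - verts ends M" "w \<in> verts ends M"
    and cd: "card {col f | f. f \<in> E \<and> ends f = {u, w} \<and> col f \<in> unused_colours col M} \<ge> t"
    by (elim exE conjE)
  have uf: "u \<notin> ends f" using pu f unfolding verts_def by blast
  hence wf: "w \<in> ends f" using pf pu by blast
  have "\<forall>c. \<exists>h\<in>E. ends h = {u,w} \<and> col h \<in> unused_colours col M \<and> col h \<noteq> c"
  proof
    fix c
    have "card {col f | f. f \<in> E \<and> ends f = {u, w} \<and> col f \<in> unused_colours col M} \<ge> 2"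
      using cd t by linarith
    hence "\<exists>a\<in>{col f | f. f \<in> E \<and> ends f = {u, w} \<and> col f \<in> unused_colours col M}. a \<noteq> c"
      by (rule two_elem)
    then obtain a where a: "a \<in> {col f | f. f \<in> E \<and> ends f = {u, w} \<and> col f \<in> unused_colours col M}" "a \<noteq> c"
      by (elim bexE)
    from a(1) obtain h where "h \<in> E" "ends h = {u, w}" "col h \<in> unused_colours col M" "a = col h"
      by (elim CollectE exE conjE) auto
    thus "\<exists>h\<in>E. ends h = {u,w} \<and> col h \<in> unused_colours col M \<and> col h \<noteq> c" using a(2) by blast
  qed
  thus ?thesis using pu wf by blast
qed

theorem lemma2p7:
  fixes V :: "'v set" and E :: "'e set" and ends :: "'e \<Rightarrow> 'v set"
    and col :: "'e \<Rightarrow> 'c" and M :: "'e set" and N :: "'v set set" and t :: nat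
  assumes G: "ec_multigraph V E ends"
    and t: "t \<ge> 5"
    and M: "max_rainbow_matching E ends col M"
    and N: "aux_matching V E ends col M t N"
    and e: "e \<in> M_N ends M N"
    and xe: "ends e = {x, y}" "x \<noteq> y" "{v, x} \<in> N"
    and g: "g \<in> E" "ends g = {v, z}"
    and gcol: "col g \<in> unused_colours col M \<union> col ` (M_N ends M N)"
    and z: "z \<notin> \<Union>N \<union> verts ends (M - M_N ends M N)"
  shows "z = y \<or> col g = col e"
proof (rule ccontr)
  assume neg: "\<not> (z = y \<or> col g = col e)"
  have fE: "finite E" using G by (simp add: ec_multigraph_def)
  have t2: "t \<ge> 2" using t by simp
  have RM: "rainbow_matching E ends col M" using M by (simp add: max_rainbow_matching_def)
  have eM: "e \<in> M" using e by (simp add: M_N_def)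
  have disjM: "\<And>a b. a \<in> M \<Longrightarrow> b \<in> M \<Longrightarrow> a \<noteq> b \<Longrightarrow> ends a \<inter> ends b = {} \<and> col a \<noteq> col b"
    using RM by (simp add: rainbow_matching_def)
  have card2: "\<And>h. h \<in> E \<Longrightarrow> card (ends h) = 2" using G by (simp add: ec_multigraph_def)
  have nonempty: "\<And>h. h \<in> E \<Longrightarrow> ends h \<noteq> {}" using card2 by fastforce
  have N1: "\<forall>p\<in>N. \<exists>u w. p = {u, w} \<and> u \<in> V - verts ends M \<and> w \<in> verts ends M \<and>
        card {col f | f. f \<in> E \<and> ends f = {u, w} \<and> col f \<in> unused_colours col M} \<ge> t"
    using N unfolding aux_matching_def by (rule conjunct1)
  have N2: "\<forall>p\<in>N. \<forall>q\<in>N. p \<noteq> q \<longrightarrow> p \<inter> q = {}"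
    using N unfolding aux_matching_def by (elim conjE)
  have C0: "\<And>a c. a \<in> M \<Longrightarrow> c \<in> unused_colours col M \<Longrightarrow> col a \<noteq> c"
    unfolding unused_colours_def by (metis ComplD imageI)
  have xV: "x \<in> verts ends M" using eM xe unfolding verts_def by blast
  have vM: "v \<notin> verts ends M"
  proof -
    obtain u w where "{v,x} = {u, w}" "u \<in> V - verts ends M" "w \<in> verts ends M"
      using bspec[OF N1 xe(3)] by (elim exE conjE) blast
    moreover have "u \<in> {v,x}" using calculation(1) by (metis insertI1)
    ultimately show ?thesis using xV by blast
  qed
  have zv: "z \<noteq> v" "z \<noteq> x" using z xe(3) by auto
  have ze: "z \<notin> ends e" using zv neg xe by auto
  have attach: "\<And>f. f \<in> M_N ends M N \<Longrightarrow> f \<noteq> e \<Longrightarrow> \<exists>u w. {u,w} \<in> N \<and> u \<notin> verts ends M \<and>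
      w \<in> ends f \<and> {u,w} \<inter> {v,x} = {} \<and>
      (\<forall>c. \<exists>h\<in>E. ends h = {u,w} \<and> col h \<in> unused_colours col M \<and> col h \<noteq> c)"
  proof -
    fix f assume f: "f \<in> M_N ends M N" "f \<noteq> e"
    have fM: "f \<in> M" using f by (simp add: M_N_def)
    obtain p where p: "p \<in> N" "p \<inter> ends f \<noteq> {}" using f by (auto simp: M_N_def)
    obtain u w where uw: "p = {u,w}" "u \<notin> verts ends M" "w \<in> ends f"
      "\<forall>c. \<exists>h\<in>E. ends h = {u,w} \<and> col h \<in> unused_colours col M \<and> col h \<noteq> c"
      using aux_pair[OF N t2 p(1) fM p(2)] by blast
    have "{v,x} \<inter> ends f = {}" using vM disjM[OF eM fM] f(2) xe(1) fM unfolding verts_def by blast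
    hence "p \<noteq> {v,x}" using p(2) by blast
    hence "p \<inter> {v,x} = {}" using bspec[OF bspec[OF N2 p(1)] xe(3)] by (rule rev_mp)
    thus "?thesis f" using uw p(1) by blast
  qed
  have zcase: "z \<notin> verts ends M \<or> (\<exists>f1\<in>M_N ends M N. f1 \<noteq> e \<and> z \<in> ends f1)"
  proof (cases "z \<in> verts ends M")
    case True
    then obtain f where f: "f \<in> M" "z \<in> ends f" unfolding verts_def by blast
    have "f \<in> M_N ends M N"
    proof (rule ccontr)
      assume "f \<notin> M_N ends M N"
      hence "z \<in> verts ends (M - M_N ends M N)" using f unfolding verts_def by blast
      thus False using z by blast
    qed
    moreover have "f \<noteq> e" using f ze by blast
    ultimately show ?thesis using f by blast
  qed simp
  have ccase: "col g \<in> unused_colours col M \<or> (\<exists>f2\<in>M_N ends M N. f2 \<noteq> e \<and> col g = col f2)"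
  proof (cases "col g \<in> unused_colours col M")
    case False
    then obtain f where f: "f \<in> M_N ends M N" "col g = col f" using gcol by blast
    moreover have "f \<noteq> e" using f neg by blast
    ultimately show ?thesis by blast
  qed simp
  have gE: "ends g \<noteq> {}" using g by simp
  show False
  proof (cases "z \<notin> verts ends M")
    case zout: True
    show False
    proof (cases "col g \<in> unused_colours col M")
      case True
      show False
      proof (rule swap[OF fE M, of "{}" "{g}"])
        show "rainbow_matching E ends col {g}" using g by (simp add: rainbow_matching_def)
        show "\<forall>a\<in>M - {}. \<forall>b\<in>{g}. ends a \<inter> ends b = {} \<and> col a \<noteq> col b"
        proof (intro ballI)
          fix a b assume a: "a \<in> M - {}" and b: "b \<in> {g}"
          have "v \<notin> ends a" "z \<notin> ends a" using vM zout a unfolding verts_def by auto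
          moreover have "col a \<noteq> col g" using True a unfolding unused_colours_def by (metis ComplD DiffD1 imageI)
          ultimately show "ends a \<inter> ends b = {} \<and> col a \<noteq> col b" using b g(2) by auto
        qed
      qed (use gE in auto)
    next
      case False
      then obtain f2 where f2: "f2 \<in> M_N ends M N" "f2 \<noteq> e" "col g = col f2" using ccase by blast
      have f2M: "f2 \<in> M" using f2 by (simp add: M_N_def)
      obtain u w where uw: "{u,w} \<in> N" "u \<notin> verts ends M" "w \<in> ends f2" "{u,w} \<inter> {v,x} = {}"
        "\<forall>c. \<exists>h\<in>E. ends h = {u,w} \<and> col h \<in> unused_colours col M \<and> col h \<noteq> c"
        using attach[OF f2(1,2)] by blast
      obtain h where h: "h \<in> E" "ends h = {u,w}" "col h \<in> unused_colours col M" "col h \<noteq> col g"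
        using uw(5) by blast
      have wM: "w \<in> verts ends M" using uw(3) f2M unfolding verts_def by blast
      have zu: "z \<noteq> u" "z \<noteq> w" using z uw(1) by auto
      have hg: "h \<noteq> g" using h(4) by blast
      show False
      proof (rule swap[OF fE M, of "{f2}" "{g,h}"])
        show "rainbow_matching E ends col {g,h}"
          using g h uw(4) zu hg unfolding rainbow_matching_def by auto
        show "\<forall>a\<in>M - {f2}. \<forall>b\<in>{g,h}. ends a \<inter> ends b = {} \<and> col a \<noteq> col b"
        proof (intro ballI)
          fix a b assume a: "a \<in> M - {f2}" and b: "b \<in> {g,h}"
          have d: "ends a \<inter> ends f2 = {}" "col a \<noteq> col f2" using disjM[OF _ f2M] a by auto
          have "u \<notin> ends a" "v \<notin> ends a" "z \<notin> ends a" using uw(2) vM zout a unfolding verts_def by auto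
          thus "ends a \<inter> ends b = {} \<and> col a \<noteq> col b"
            using b d g h uw(3) f2(3) a C0 unfolding unused_colours_def by auto
        qed
        show "card {f2} < card {g,h}" using hg by simp
      qed (use g h nonempty f2M in auto)
    qed
  next
    case zin: False
    then obtain f1 where f1: "f1 \<in> M_N ends M N" "f1 \<noteq> e" "z \<in> ends f1" using zcase by blast
    have f1M: "f1 \<in> M" using f1 by (simp add: M_N_def)
    obtain u1 w1 where uw1: "{u1,w1} \<in> N" "u1 \<notin> verts ends M" "w1 \<in> ends f1" "{u1,w1} \<inter> {v,x} = {}"
      "\<forall>c. \<exists>h\<in>E. ends h = {u1,w1} \<and> col h \<in> unused_colours col M \<and> col h \<noteq> c"
      using attach[OF f1(1,2)] by blast
    have zu1: "z \<noteq> u1" "z \<noteq> w1" using z uw1(1) by auto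
    have w1M: "w1 \<in> verts ends M" using uw1(3) f1M unfolding verts_def by blast
    show False
    proof (cases "col g \<in> unused_colours col M \<or> col g = col f1")
      case True
      obtain h where h: "h \<in> E" "ends h = {u1,w1}" "col h \<in> unused_colours col M" "col h \<noteq> col g"
        using uw1(5) by blast
      have hg: "h \<noteq> g" using h(4) by blast
      show False
      proof (rule swap[OF fE M, of "{f1}" "{g,h}"])
        show "rainbow_matching E ends col {g,h}"
          using g h uw1(4) zu1 hg unfolding rainbow_matching_def by auto
        show "\<forall>a\<in>M - {f1}. \<forall>b\<in>{g,h}. ends a \<inter> ends b = {} \<and> col a \<noteq> col b"
        proof (intro ballI)
          fix a b assume a: "a \<in> M - {f1}" and b: "b \<in> {g,h}"
          have d: "ends a \<inter> ends f1 = {}" "col a \<noteq> col f1" using disjM[OF _ f1M] a by auto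
          have "u1 \<notin> ends a" "v \<notin> ends a" using uw1(2) vM a unfolding verts_def by auto
          moreover have "col a \<noteq> col g" using True d(2) a C0 unfolding unused_colours_def by auto
          ultimately show "ends a \<inter> ends b = {} \<and> col a \<noteq> col b"
            using b d g h uw1(3) f1(3) a C0 unfolding unused_colours_def by auto
        qed
        show "card {f1} < card {g,h}" using hg by simp
      qed (use g h nonempty f1M in auto)
    next
      case False
      then obtain f2 where f2: "f2 \<in> M_N ends M N" "f2 \<noteq> e" "col g = col f2" using ccase by blast
      have f2M: "f2 \<in> M" using f2 by (simp add: M_N_def)
      have f12: "f1 \<noteq> f2" using False f2(3) by auto
      obtain u2 w2 where uw2: "{u2,w2} \<in> N" "u2 \<notin> verts ends M" "w2 \<in> ends f2" "{u2,w2} \<inter> {v,x} = {}"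
        "\<forall>c. \<exists>h\<in>E. ends h = {u2,w2} \<and> col h \<in> unused_colours col M \<and> col h \<noteq> c"
        using attach[OF f2(1,2)] by blast
      have zu2: "z \<noteq> u2" "z \<noteq> w2" using z uw2(1) by auto
      have d12: "ends f1 \<inter> ends f2 = {}" "col f1 \<noteq> col f2" using disjM[OF f1M f2M f12] by auto
      have pne: "{u1,w1} \<noteq> {u2,w2}"
      proof
        assume "{u1,w1} = {u2,w2}"
        hence "w2 \<in> {u1,w1}" by blast
        moreover have "w2 \<noteq> u1" using uw1(2) uw2(3) f2M unfolding verts_def by blast
        moreover have "w2 \<noteq> w1" using d12(1) uw1(3) uw2(3) by blast
        ultimately show False by blast
      qed
      hence p12: "{u1,w1} \<inter> {u2,w2} = {}" using bspec[OF bspec[OF N2 uw1(1)] uw2(1)] by (rule rev_mp)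
      obtain h1 where h1: "h1 \<in> E" "ends h1 = {u1,w1}" "col h1 \<in> unused_colours col M"
        using uw1(5) by blast
      obtain h2 where h2: "h2 \<in> E" "ends h2 = {u2,w2}" "col h2 \<in> unused_colours col M" "col h2 \<noteq> col h1"
        using uw2(5) by blast
      have gc: "col g \<notin> unused_colours col M" using f2(3) f2M unfolding unused_colours_def by auto
      have hg: "h1 \<noteq> g" "h2 \<noteq> g" "h1 \<noteq> h2" using h1 h2 gc by auto
      show False
      proof (rule swap[OF fE M, of "{f1,f2}" "{g,h1,h2}"])
        show "rainbow_matching E ends col {g,h1,h2}"
          using g h1 h2 uw1(4) uw2(4) p12 zu1 zu2 hg gc unfolding rainbow_matching_def by auto
        show "\<forall>a\<in>M - {f1,f2}. \<forall>b\<in>{g,h1,h2}. ends a \<inter> ends b = {} \<and> col a \<noteq> col b"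
        proof (intro ballI)
          fix a b assume a: "a \<in> M - {f1,f2}" and b: "b \<in> {g,h1,h2}"
          have d1: "ends a \<inter> ends f1 = {}" using disjM[OF _ f1M] a by auto
          have d2: "ends a \<inter> ends f2 = {}" "col a \<noteq> col f2" using disjM[OF _ f2M] a by auto
          have "u1 \<notin> ends a" "u2 \<notin> ends a" "v \<notin> ends a" using uw1(2) uw2(2) vM a unfolding verts_def by auto
          thus "ends a \<inter> ends b = {} \<and> col a \<noteq> col b"
            using b d1 d2 g h1 h2 uw1(3) uw2(3) f1(3) f2(3) a C0 unfolding unused_colours_def by auto
        qed
        show "card {f1,f2} < card {g,h1,h2}" using hg f12 by simp
      qed (use g h1 h2 nonempty f1M f2M in auto)
    qed
  qed
qed

end
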